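(* Let $F(z)=\sum_{q=0}^{\infty}a_qz^q$ be holomorphic in a neighborhood of the origin with $a_0\neq 0$, and let $X\in\mathbb{C}$. Define the coefficients $c_p^{(X)}$ by $$\sum_{p=0}^{\infty}c_p^{(X)}z^p=F(z)^X .$$ Then for every integer $p\ge 0$ the following two expressions hold: (I) $$c_p^{(X)}=\sum_{0\le k_1,\dots,k_p\le p}\binom{X}{K}\frac{K!}{k_1!\cdots k_p!}\,\delta_{p,\sum_{m=1}^p mk_m}\;a_0^{X-K}a_1^{k_1}\cdots a_p^{k_p},\qquad K=k_1+\cdots+k_p ;$$ (II) $$c_p^{(X)}=\big(a_0^{X}\big)^{p+1}\,\det\!\big(M^{-X}+E\big),$$ where $M$ is the $(p+1)\times(p+1)$ lower-triangular Toeplitz matrix with entries $M_{ij}=a_{i-j}$ for $0\le j\le i\le p$ and $M_{ij}=0$ for $j>i$, and $E$ is the $(p+1)\times(p+1)$ matrix whose only nonzero column is its last column, equal to $(1,0,\dots,0,-1/a_0^X)^T$ (i.e. $e_0-a_0^{-X}e_p$).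
   Context: Powers with complex exponent: fix $\lambda\in\mathbb{C}$ with $e^\lambda=a_0$, set $a_0^{Y}=e^{Y\lambda}$ for $Y\in\mathbb{C}$ (so $a_0^{X-K}=a_0^Xa_0^{-K}$), and define $F(z)^X=\exp(X\log F(z))$ where $\log F$ is the holomorphic logarithm near $0$ with $\log F(0)=\lambda$. The generalized binomial coefficient is $\binom{X}{N}=X(X-1)\cdots(X-N+1)/N!$, and $\delta$ is the Kronecker delta. For a $(p+1)\times(p+1)$ lower-triangular Toeplitz matrix $M$ with diagonal entry $a_0\neq0$ and $Y\in\mathbb{C}$, $M^{Y}$ denotes $a_0^{Y}\sum_{n=0}^{p}\binom{Y}{n}(a_0^{-1}M-I)^n$ (a finite sum, since $a_0^{-1}M-I$ is nilpotent). For $p=0$ the sum in (I) is over the empty tuple and equals $a_0^X$. *)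

theory Defs
  imports "HOL-Complex_Analysis.Complex_Analysis" "Jordan_Normal_Form.Determinant"
begin

definition taylor_coeff :: "(complex \<Rightarrow> complex) \<Rightarrow> nat \<Rightarrow> complex" where
  "taylor_coeff f q = (deriv ^^ q) f 0 / of_nat (fact q)"

(* complex power a0^Y := exp (Y * lam), where lam is the fixed logarithm of a0 *)
definition cpow :: "complex \<Rightarrow> complex \<Rightarrow> complex" where
  "cpow lam Y = exp (Y * lam)"

definition toeplitz_lt :: "(nat \<Rightarrow> complex) \<Rightarrow> nat \<Rightarrow> complex mat" where
  "toeplitz_lt a p = mat (p+1) (p+1) (\<lambda>(i,j). if j \<le> i then a (i - j) else 0)"

definition toeplitz_pow :: "complex \<Rightarrow> complex mat \<Rightarrow> complex \<Rightarrow> complex mat" where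
  "toeplitz_pow lam M Y =
     (let n = dim_row M; N = (inverse (cpow lam 1)) \<cdot>\<^sub>m M - 1\<^sub>m n in
      mat n n (\<lambda>(i,j). cpow lam Y * (\<Sum>k<n. (Y gchoose k) * (N ^\<^sub>m k) $$ (i,j))))"

definition E_mat :: "complex \<Rightarrow> complex \<Rightarrow> nat \<Rightarrow> complex mat" where
  "E_mat lam X p = mat (p+1) (p+1) (\<lambda>(i,j). if j = p then
       (if i = 0 then 1 else 0) - (if i = p then 1 / cpow lam X else 0) else 0)"

end

theory Submission
  imports Defs
begin
definition Tm :: "nat \<Rightarrow> complex fps \<Rightarrow> complex mat" where
  "Tm n P = mat n n (\<lambda>(i,j). if j \<le> i then fps_nth P (i-j) else 0)"

lemma Tm_dim[simp]: "Tm n P \<in> carrier_mat n n" "dim_row (Tm n P) = n" "dim_col (Tm n P) = n"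
  by (auto simp: Tm_def)

lemma Tm_index[simp]: "i < n \<Longrightarrow> j < n \<Longrightarrow> Tm n P $$ (i,j) = (if j \<le> i then fps_nth P (i-j) else 0)"
  by (simp add: Tm_def)

lemma Tm_mult: "Tm n P * Tm n Q = Tm n (P * Q)"
proof (rule eq_matI)
  fix i j assume ij: "i < dim_row (Tm n (P*Q))" "j < dim_col (Tm n (P*Q))"
  hence i: "i < n" and j: "j < n" by auto
  have "(Tm n P * Tm n Q) $$ (i,j) = (\<Sum>k<n. (if k \<le> i then fps_nth P (i-k) else 0) * (if j \<le> k then fps_nth Q (k-j) else 0))"
    using i j by (simp add: scalar_prod_def lessThan_atLeast0 row_def col_def)
  also have "\<dots> = (if j \<le> i then fps_nth (P*Q) (i-j) else 0)"
  proof (cases "j \<le> i")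
    case True
    have "(\<Sum>k<n. (if k \<le> i then fps_nth P (i-k) else 0) * (if j \<le> k then fps_nth Q (k-j) else 0))
        = (\<Sum>k\<in>{j..i}. fps_nth P (i-k) * fps_nth Q (k-j))"
      using i by (intro sum.mono_neutral_cong_right) auto
    also have "\<dots> = (\<Sum>t\<in>{0..i-j}. fps_nth P t * fps_nth Q (i-j-t))"
      by (rule sum.reindex_bij_witness[of _ "\<lambda>t. i - t" "\<lambda>k. i - k"]) (use True in auto)
    finally show ?thesis using True by (simp add: fps_mult_nth)
  next
    case False thus ?thesis by (auto intro!: sum.neutral)
  qed
  finally show "(Tm n P * Tm n Q) $$ (i,j) = Tm n (P*Q) $$ (i,j)" using i j by simp
qed auto

lemma Tm_one: "Tm n 1 = 1\<^sub>m n"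
  by (rule eq_matI) auto

lemma Tm_pow: "Tm n P ^\<^sub>m k = Tm n (P ^ k)"
  by (induction k) (auto simp: Tm_one Tm_mult mult.commute)

lemma ode_unique:
  fixes A C D :: "complex fps" and c :: complex
  assumes A0: "fps_nth A 0 \<noteq> 0" and D0: "fps_nth D 0 \<noteq> 0" and CD0: "fps_nth C 0 = fps_nth D 0"
    and eC: "A * fps_deriv C = fps_const c * fps_deriv A * C"
    and eD: "A * fps_deriv D = fps_const c * fps_deriv A * D"
  shows "C = D"
proof -
  have "A * (fps_deriv C * D - C * fps_deriv D) = (A * fps_deriv C) * D - (A * fps_deriv D) * C"
    by (simp add: algebra_simps)
  also have "\<dots> = 0" by (simp add: eC eD algebra_simps)
  finally have W: "fps_deriv C * D - C * fps_deriv D = 0"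
    using A0 by (auto simp: fps_nonzero_nth)
  have ID: "D * inverse D = 1" using D0 by (rule inverse_mult_eq_1')
  have "fps_deriv (C * inverse D) = fps_deriv C * inverse D - C * fps_deriv D * (inverse D)\<^sup>2"
    using D0 by (simp add: fps_inverse_deriv algebra_simps)
  also have "\<dots> = (fps_deriv C * D - C * fps_deriv D) * (inverse D)\<^sup>2"
  proof -
    have "fps_deriv C * inverse D = fps_deriv C * (D * inverse D) * inverse D" by (simp add: ID)
    thus ?thesis by (simp add: power2_eq_square algebra_simps)
  qed
  also have "\<dots> = 0" by (simp add: W)
  finally have Z: "fps_deriv (C * inverse D) = 0" .
  have "C * inverse D = fps_const (fps_nth (C * inverse D) 0)" using fps_deriv_eq_0_iff[THEN iffD1, OF Z] .
  also have "fps_nth (C * inverse D) 0 = 1" using D0 CD0 by (simp add: fps_mult_nth)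
  finally have "C * inverse D = 1" by simp
  hence "C * inverse D * D = D" by simp
  thus ?thesis using ID by (simp add: mult.assoc mult.commute[of "inverse D"])
qed

lemma binom_ode: "(1 + fps_X) * fps_deriv (fps_binomial c) = fps_const (c::complex) * fps_binomial c"
proof -
  have u: "fps_nth (1 + fps_X :: complex fps) 0 \<noteq> 0" by simp
  have "fps_deriv (fps_binomial c) = fps_const c * fps_binomial c * inverse (1 + fps_X)"
    using fps_binomial_deriv[of c] fps_divide_unit[OF u] by simp
  hence "(1 + fps_X) * fps_deriv (fps_binomial c) = fps_const c * fps_binomial c * ((1 + fps_X) * inverse (1 + fps_X))"
    by (simp only: mult.assoc mult.commute mult.left_commute)
  thus ?thesis using inverse_mult_eq_1'[OF u] by simp
qed

lemma candidate_ode: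
  fixes A :: "complex fps" and c a0 k :: complex
  defines "B \<equiv> fps_const (inverse a0) * A - 1"
  assumes a0: "fps_nth A 0 = a0" "a0 \<noteq> 0"
  defines "D \<equiv> fps_const k * (fps_binomial c oo B)"
  shows "A * fps_deriv D = fps_const c * fps_deriv A * D"
proof -
  have B0: "fps_nth B 0 = 0" using a0 by (simp add: B_def)
  have AB: "A = fps_const a0 * (1 + B)"
  proof -
    have "fps_const a0 * (1 + B) = fps_const a0 * fps_const (inverse a0) * A" by (simp add: B_def)
    also have "fps_const a0 * fps_const (inverse a0) = 1" using a0 by (simp flip: fps_const_mult)
    finally show ?thesis by simp
  qed
  have dB: "fps_deriv B = fps_const (inverse a0) * fps_deriv A" by (simp add: B_def)
  have "((1 + fps_X) * fps_deriv (fps_binomial c)) oo B = (fps_const c * fps_binomial c) oo B"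
    by (simp only: binom_ode)
  hence E: "(1 + B) * (fps_deriv (fps_binomial c) oo B) = fps_const c * (fps_binomial c oo B)"
    using B0 by (simp add: fps_compose_mult_distrib fps_compose_add_distrib)
  have dD: "fps_deriv D = fps_const k * ((fps_deriv (fps_binomial c) oo B) * fps_deriv B)"
    unfolding D_def using B0 by (simp add: fps_compose_deriv)
  have "A * fps_deriv D = (fps_const a0 * fps_const (inverse a0)) * fps_const k * ((1 + B) * (fps_deriv (fps_binomial c) oo B)) * fps_deriv A"
    unfolding dD dB by (subst AB) (simp only: mult.assoc mult.commute mult.left_commute)
  also have "fps_const a0 * fps_const (inverse a0) = 1"
    using a0 by (simp flip: fps_const_mult)
  finally show ?thesis unfolding E D_def by (simp only: mult.assoc mult.commute mult.left_commute mult_1)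
qed

lemma analytic_part:
  fixes F L :: "complex \<Rightarrow> complex" and r :: real and X lam :: complex
  assumes "r > 0"
    and HF: "F holomorphic_on ball 0 r"
    and F0: "F 0 \<noteq> 0"
    and lam: "exp lam = F 0"
    and HL: "L holomorphic_on ball 0 r"
    and FL: "\<And>z. z \<in> ball 0 r \<Longrightarrow> exp (L z) = F z"
    and L0: "L 0 = lam"
  shows "fps_expansion (\<lambda>z. exp (X * L z)) 0 =
     fps_const (cpow lam X) * (fps_binomial X oo (fps_const (inverse (F 0)) * fps_expansion F 0 - 1))"
proof -
  define G where "G = (\<lambda>z. exp (X * L z))"
  define A where "A = fps_expansion F 0"
  define C where "C = fps_expansion G 0"
  have op: "open (ball (0::complex) r)" and z0: "(0::complex) \<in> ball 0 r" using \<open>r > 0\<close> by auto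
  have HG: "G holomorphic_on ball 0 r" unfolding G_def using HL by (intro holomorphic_intros)
  have eA: "F has_fps_expansion A" unfolding A_def using op z0 HF by blast
  have eC: "G has_fps_expansion C" unfolding C_def using op z0 HG by blast
  have dL: "(L has_field_derivative deriv L z) (at z)" if "z \<in> ball 0 r" for z
    using holomorphic_derivI[OF HL op that] .
  have dG: "deriv G z = G z * (X * deriv L z)" if "z \<in> ball 0 r" for z
  proof -
    have "(G has_field_derivative G z * (X * deriv L z)) (at z)"
      unfolding G_def using dL[OF that] by (auto intro!: derivative_eq_intros)
    thus ?thesis by (rule DERIV_imp_deriv)
  qed
  have dF: "deriv F z = F z * deriv L z" if "z \<in> ball 0 r" for z
  proof -
    have "((\<lambda>z. exp (L z)) has_field_derivative exp (L z) * deriv L z) (at z)"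
      using dL[OF that] by (auto intro!: derivative_eq_intros)
    hence "(F has_field_derivative exp (L z) * deriv L z) (at z)"
      by (rule has_field_derivative_transform_within_open[OF _ op that]) (use FL in auto)
    thus ?thesis using FL[OF that] by (simp add: DERIV_imp_deriv)
  qed
  have ev: "eventually (\<lambda>z. F z * deriv G z = X * deriv F z * G z) (nhds 0)"
  proof -
    have "eventually (\<lambda>z. z \<in> ball 0 r) (nhds (0::complex))" by (rule eventually_nhds_in_open[OF op z0])
    thus ?thesis by eventually_elim (simp add: dG dF)
  qed
  have e1: "(\<lambda>z. F z * deriv G z) has_fps_expansion A * fps_deriv C"
    by (intro has_fps_expansion_mult has_fps_expansion_deriv eA eC)
  have e2: "(\<lambda>z. X * deriv F z * G z) has_fps_expansion fps_const X * fps_deriv A * C"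
    by (intro has_fps_expansion_mult has_fps_expansion_deriv has_fps_expansion_cmult_left eA eC)
  have e1': "(\<lambda>z. X * deriv F z * G z) has_fps_expansion A * fps_deriv C"
    using has_fps_expansion_cong[OF ev refl] e1 by blast
  have odeC: "A * fps_deriv C = fps_const X * fps_deriv A * C"
    using fps_expansion_unique_complex[OF e1' e2] .
  define B where "B = fps_const (inverse (F 0)) * A - 1"
  define D where "D = fps_const (cpow lam X) * (fps_binomial X oo B)"
  have A0: "fps_nth A 0 = F 0" by (simp add: A_def fps_expansion_def)
  have C0: "fps_nth C 0 = cpow lam X" by (simp add: C_def G_def fps_expansion_def cpow_def L0 mult.commute)
  have D0: "fps_nth D 0 = cpow lam X" by (simp add: D_def)
  have odeD: "A * fps_deriv D = fps_const X * fps_deriv A * D"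
    unfolding D_def B_def by (rule candidate_ode[OF A0 F0])
  have "C = D"
    by (rule ode_unique[OF _ _ _ odeC odeD]) (use A0 F0 C0 D0 in \<open>auto simp: cpow_def\<close>)
  thus ?thesis by (simp add: C_def G_def D_def B_def A_def)
qed

lemma toeplitz_lt_Tm: "toeplitz_lt (\<lambda>k. fps_nth A k) p = Tm (p+1) A"
  by (simp add: toeplitz_lt_def Tm_def)

lemma toeplitz_pow_Tm:
  assumes A0: "fps_nth A 0 = cpow lam 1" and nz: "cpow lam 1 \<noteq> 0"
  shows "toeplitz_pow lam (Tm n A) Y =
     Tm n (fps_const (cpow lam Y) * (fps_binomial Y oo (fps_const (inverse (cpow lam 1)) * A - 1)))"
proof -
  define B where "B = fps_const (inverse (cpow lam 1)) * A - 1"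
  have B0: "fps_nth B 0 = 0" using A0 nz by (simp add: B_def)
  have N: "inverse (cpow lam 1) \<cdot>\<^sub>m Tm n A - 1\<^sub>m n = Tm n B"
    by (rule eq_matI) (auto simp: B_def)
  show ?thesis
    unfolding toeplitz_pow_def Let_def Tm_dim N Tm_pow B_def[symmetric]
  proof (rule eq_matI)
    fix i j assume ij: "i < dim_row (Tm n (fps_const (cpow lam Y) * (fps_binomial Y oo B)))"
        "j < dim_col (Tm n (fps_const (cpow lam Y) * (fps_binomial Y oo B)))"
    hence i: "i < n" and j: "j < n" by auto
    have "(\<Sum>k<n. (Y gchoose k) * Tm n (B ^ k) $$ (i, j)) =
          (if j \<le> i then fps_nth (fps_binomial Y oo B) (i - j) else 0)"
    proof (cases "j \<le> i")
      case True
      have "(\<Sum>k<n. (Y gchoose k) * Tm n (B ^ k) $$ (i, j)) = (\<Sum>k<n. (Y gchoose k) * fps_nth (B ^ k) (i - j))"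
        using i j True by (intro sum.cong) auto
      also have "\<dots> = (\<Sum>k\<in>{0..i-j}. (Y gchoose k) * fps_nth (B ^ k) (i - j))"
      proof (rule sum.mono_neutral_right)
        show "\<forall>k\<in>{..<n} - {0..i - j}. (Y gchoose k) * fps_nth (B ^ k) (i - j) = 0"
          using startsby_zero_power_prefix[OF B0] by auto
      qed (use i in auto)
      also have "\<dots> = fps_nth (fps_binomial Y oo B) (i - j)" by (simp add: fps_compose_nth)
      finally show ?thesis using True by simp
    qed (use i j in \<open>auto intro!: sum.neutral\<close>)
    thus "mat n n (\<lambda>(i, j). cpow lam Y * (\<Sum>k<n. (Y gchoose k) * Tm n (B ^ k) $$ (i, j))) $$ (i, j) =
         Tm n (fps_const (cpow lam Y) * (fps_binomial Y oo B)) $$ (i, j)"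
      using i j by simp
  qed auto
qed

lemma det_part:
  fixes C Dm :: "complex fps" and p :: nat
  assumes CD: "C * Dm = 1" and C0: "fps_nth C 0 = cpow lam X"
  shows "(cpow lam X) ^ (p + 1) * det (Tm (p+1) Dm + E_mat lam X p) = fps_nth C p"
proof -
  define n where "n = p + 1"
  define Q where "Q = Tm n Dm + E_mat lam X p"
  have cnz: "cpow lam X \<noteq> 0" by (simp add: cpow_def)
  have D0: "fps_nth Dm 0 = 1 / cpow lam X"
  proof -
    have "fps_nth (C * Dm) 0 = 1" using CD by simp
    thus ?thesis using C0 cnz by (simp add: fps_mult_nth field_simps)
  qed
  have Ec: "E_mat lam X p \<in> carrier_mat n n" by (simp add: E_mat_def n_def)
  have Qc: "Q \<in> carrier_mat n n" using Ec by (simp add: Q_def)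
  have Q: "Q = mat n n (\<lambda>(i,j). if j = p then (if i = 0 then 1 else 0) else if j \<le> i then fps_nth Dm (i-j) else 0)"
  proof (rule eq_matI)
    fix i j assume "i < dim_row (mat n n (\<lambda>(i,j). if j = p then (if i = 0 then 1 else 0) else if j \<le> i then fps_nth Dm (i-j) else 0))"
       "j < dim_col (mat n n (\<lambda>(i,j). if j = p then (if i = 0 then 1 else 0) else if j \<le> i then fps_nth Dm (i-j) else 0))"
    hence i: "i < n" and j: "j < n" by auto
    have Ei: "E_mat lam X p $$ (i,j) = (if j = p then (if i = 0 then 1 else 0) - (if i = p then 1 / cpow lam X else 0) else 0)"
      using i j by (simp add: E_mat_def n_def)
    have "Q $$ (i,j) = Tm n Dm $$ (i,j) + E_mat lam X p $$ (i,j)"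
      using i j Ec by (simp add: Q_def)
    also have "\<dots> = (if j = p then (if i = 0 then 1 else 0) else if j \<le> i then fps_nth Dm (i-j) else 0)"
    proof (cases "j = p")
      case True
      hence "i \<le> p" using i by (simp add: n_def)
      thus ?thesis using True i j Ei D0 by (cases "i = p") auto
    qed (use i j Ei in simp)
    finally show "Q $$ (i,j) = mat n n (\<lambda>(i,j). if j = p then (if i = 0 then 1 else 0) else if j \<le> i then fps_nth Dm (i-j) else 0) $$ (i,j)"
      using i j by simp
  qed (use Qc in auto)
  have Qi: "Q $$ (k,j) = (if j = p then (if k = 0 then 1 else 0) else if j \<le> k then fps_nth Dm (k-j) else 0)"
    if "k < n" "j < n" for k j
    using that by (subst Q) simp
  define R where "R = mat n n (\<lambda>(i,j). if j = p then fps_nth C i else if i = j then 1 else 0)"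
  have TR: "Tm n C * Q = R"
  proof (rule eq_matI)
    fix i j assume "i < dim_row R" "j < dim_col R"
    hence i: "i < n" and j: "j < n" by (auto simp: R_def)
    show "(Tm n C * Q) $$ (i, j) = R $$ (i, j)"
    proof (cases "j = p")
      case True
      have "(Tm n C * Q) $$ (i, j) = (\<Sum>k<n. Tm n C $$ (i,k) * Q $$ (k,j))"
        using i j Qc by (simp add: scalar_prod_def lessThan_atLeast0 row_def col_def)
      also have "\<dots> = (\<Sum>k<n. if k = 0 then fps_nth C i else 0)"
      proof (rule sum.cong)
        fix k assume "k \<in> {..<n}"
        hence k: "k < n" by simp
        show "Tm n C $$ (i,k) * Q $$ (k,j) = (if k = 0 then fps_nth C i else 0)"
          using Qi[OF k j] Tm_index[OF i k, of C] True by simp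
      qed simp
      also have "\<dots> = fps_nth C i" using i by (simp add: n_def)
      finally show ?thesis using i j True by (simp add: R_def)
    next
      case False
      have "(Tm n C * Q) $$ (i, j) = (\<Sum>k<n. Tm n C $$ (i,k) * Q $$ (k,j))"
        using i j Qc by (simp add: scalar_prod_def lessThan_atLeast0 row_def col_def)
      also have "\<dots> = (\<Sum>k<n. Tm n C $$ (i,k) * Tm n Dm $$ (k,j))"
      proof (rule sum.cong)
        fix k assume "k \<in> {..<n}"
        hence k: "k < n" by simp
        show "Tm n C $$ (i,k) * Q $$ (k,j) = Tm n C $$ (i,k) * Tm n Dm $$ (k,j)"
          using Qi[OF k j] Tm_index[OF k j, of Dm] False by simp
      qed simp
      also have "\<dots> = (Tm n C * Tm n Dm) $$ (i,j)"
        using i j by (simp add: scalar_prod_def lessThan_atLeast0 row_def col_def)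
      also have "\<dots> = (1\<^sub>m n) $$ (i,j)" by (simp add: Tm_mult CD Tm_one)
      finally show ?thesis using i j False by (simp add: R_def)
    qed
  qed (use Qc in \<open>auto simp: R_def\<close>)
  have Rc: "R \<in> carrier_mat n n" by (simp add: R_def)
  have "upper_triangular R"
    unfolding upper_triangular_def
  proof (intro allI impI)
    fix i j assume "i < dim_row R" "j < i"
    hence "i < n" "j < n" "j \<noteq> p" "i \<noteq> j" by (auto simp: R_def n_def)
    thus "R $$ (i,j) = 0" by (simp add: R_def)
  qed
  hence "det R = (\<Prod>i = 0..<n. R $$ (i,i))" using det_upper_triangular[OF _ Rc] by (simp add: prod_list_diag_prod R_def)
  also have "\<dots> = fps_nth C p" by (simp add: n_def R_def)
  finally have dR: "det R = fps_nth C p" .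
  have "det (Tm n C) = (\<Prod>i = 0..<n. Tm n C $$ (i,i))"
    using det_lower_triangular[of n "Tm n C"] by (simp add: prod_list_diag_prod)
  also have "\<dots> = (cpow lam X) ^ n" by (simp add: C0)
  finally have dT: "det (Tm n C) = (cpow lam X) ^ n" .
  have "det (Tm n C * Q) = det (Tm n C) * det Q" by (rule det_mult[OF _ Qc]) simp
  thus ?thesis using TR dR dT by (simp add: Q_def n_def)
qed

lemma binom_exp_form:
  fixes u v :: "complex fps"
  shows "fps_const (1 / fact K) * (u + v) ^ K =
    (\<Sum>j\<in>{0..K}. (fps_const (1 / fact j) * u ^ j) * (fps_const (1 / fact (K - j)) * v ^ (K - j)))"
proof -
  have "fps_const (1 / fact K) * (u + v) ^ K = (\<Sum>j\<le>K. fps_const (1 / fact K) * (of_nat (K choose j) * u ^ j * v ^ (K - j)))"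
    by (simp add: binomial_ring sum_distrib_left)
  also have "\<dots> = (\<Sum>j\<in>{0..K}. (fps_const (1 / fact j) * u ^ j) * (fps_const (1 / fact (K - j)) * v ^ (K - j)))"
  proof (rule sum.cong)
    fix j assume "j \<in> {0..K}"
    hence jK: "j \<le> K" by simp
    have c: "(1 / fact K) * (of_nat (K choose j) :: complex) = (1 / fact j) * (1 / fact (K - j))"
      using binomial_fact[OF jK, where 'a = complex] by (simp add: field_simps)
    have "fps_const (1 / fact K) * (of_nat (K choose j) * u ^ j * v ^ (K - j))
        = fps_const ((1 / fact K) * (of_nat (K choose j) :: complex)) * (u ^ j * v ^ (K - j))"
    proof -
      have o: "(of_nat (K choose j) :: complex fps) = fps_const (of_nat (K choose j))" by (simp add: fps_of_nat)
      show ?thesis unfolding o by (metis fps_const_mult mult.assoc)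
    qed
    also have "\<dots> = fps_const (1 / fact j) * fps_const (1 / fact (K - j)) * (u ^ j * v ^ (K - j))"
      by (simp only: c fps_const_mult)
    finally show "fps_const (1 / fact K) * (of_nat (K choose j) * u ^ j * v ^ (K - j)) =
        (fps_const (1 / fact j) * u ^ j) * (fps_const (1 / fact (K - j)) * v ^ (K - j))"
      by (simp only: mult.assoc mult.commute mult.left_commute)
  qed (auto simp: atLeast0AtMost)
  finally show ?thesis .
qed

lemma multinom:
  fixes x :: "'i \<Rightarrow> complex fps" and I :: "'i set"
  assumes "finite I"
  shows "K \<le> N \<Longrightarrow> fps_const (1 / fact K) * (\<Sum>i\<in>I. x i) ^ K =
    (\<Sum>k\<in>{k \<in> PiE I (\<lambda>_. {0..N}). sum k I = K}. \<Prod>i\<in>I. fps_const (1 / fact (k i)) * x i ^ k i)"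
  using assms
proof (induction I arbitrary: K rule: finite_induct)
  case empty
  show ?case
  proof (cases "K = 0")
    case True
    have "{k \<in> PiE {} (\<lambda>_. {0..N}). sum k {} = K} = {\<lambda>_. undefined}" using True by auto
    thus ?thesis using True by simp
  next
    case False
    have "{k \<in> PiE {} (\<lambda>_. {0..N}). sum k {} = K} = {}" using False by auto
    thus ?thesis using False by simp
  qed
next
  case (insert a I)
  define g where "g = (\<lambda>i j. fps_const (1 / fact j) * x i ^ j)"
  define S where "S = (\<lambda>(J::'i set) L. {k \<in> PiE J (\<lambda>_. {0..N}). sum k J = L})"
  have "fps_const (1 / fact K) * (\<Sum>i\<in>insert a I. x i) ^ K
      = (\<Sum>j\<in>{0..K}. g a j * (fps_const (1 / fact (K - j)) * (\<Sum>i\<in>I. x i) ^ (K - j)))"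
    using insert.hyps by (simp add: binom_exp_form g_def)
  also have "\<dots> = (\<Sum>j\<in>{0..K}. g a j * (\<Sum>k\<in>S I (K - j). \<Prod>i\<in>I. g i (k i)))"
    using insert.IH insert.prems by (intro sum.cong refl) (simp add: g_def S_def)
  also have "\<dots> = (\<Sum>(j,k)\<in>Sigma {0..K} (\<lambda>j. S I (K - j)). g a j * (\<Prod>i\<in>I. g i (k i)))"
  proof -
    have fin: "finite (S I L)" for L
      by (rule finite_subset[of _ "PiE I (\<lambda>_. {0..N})"]) (auto simp: S_def insert.hyps intro!: finite_PiE)
    show ?thesis unfolding sum_distrib_left by (rule sum.Sigma) (auto simp: fin)
  qed
  also have "\<dots> = (\<Sum>k\<in>S (insert a I) K. \<Prod>i\<in>insert a I. g i (k i))"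
  proof (rule sum.reindex_bij_witness[where j = "\<lambda>(j,k). k(a := j)" and i = "\<lambda>k. (k a, k(a := undefined))"])
    fix jk assume jk: "jk \<in> Sigma {0..K} (\<lambda>j. S I (K - j))"
    obtain j k where e: "jk = (j,k)" by fastforce
    have j: "j \<le> K" and k: "k \<in> PiE I (\<lambda>_. {0..N})" and sk: "sum k I = K - j"
      using jk by (auto simp: e S_def)
    have ka: "k a = undefined" using k insert.hyps by (auto simp: PiE_def extensional_def)
    show "(case (case jk of (j, k) \<Rightarrow> k(a := j)) of k \<Rightarrow> (k a, k(a := undefined))) = jk"
      using ka by (auto simp: e fun_eq_iff)
    have s2: "sum (k(a := j)) I = sum k I" using insert.hyps by (intro sum.cong) auto
    show "(case jk of (j, k) \<Rightarrow> k(a := j)) \<in> S (insert a I) K"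
      using k j sk insert.hyps insert.prems s2 by (auto simp: e S_def PiE_iff)
    have p2: "(\<Prod>i\<in>I. g i ((k(a := j)) i)) = (\<Prod>i\<in>I. g i (k i))" using insert.hyps by (intro prod.cong) auto
    show "(\<Prod>i\<in>insert a I. g i ((case jk of (j, k) \<Rightarrow> k(a := j)) i)) =
          (case jk of (j, k) \<Rightarrow> g a j * (\<Prod>i\<in>I. g i (k i)))"
      using p2 insert.hyps by (simp add: e)
  next
    fix k assume k: "k \<in> S (insert a I) K"
    show "(case (k a, k(a := undefined)) of (j, k) \<Rightarrow> k(a := j)) = k" by simp
    have kk: "k \<in> PiE (insert a I) (\<lambda>_. {0..N})" and sk: "sum k (insert a I) = K" using k by (auto simp: S_def)
    have sk2: "k a + sum k I = K" using sk insert.hyps by simp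
    have s2: "sum (k(a := undefined)) I = sum k I" using insert.hyps by (intro sum.cong) auto
    show "(k a, k(a := undefined)) \<in> Sigma {0..K} (\<lambda>j. S I (K - j))"
      using kk sk2 s2 insert.hyps by (auto simp: S_def PiE_iff extensional_def)
  qed
  finally show ?case by (simp add: S_def g_def)
qed

lemma power_trunc:
  fixes f g :: "complex fps"
  assumes "\<forall>i\<le>n. fps_nth f i = fps_nth g i"
  shows "\<forall>i\<le>n. fps_nth (f ^ K) i = fps_nth (g ^ K) i"
proof (induction K)
  case (Suc K)
  show ?case
  proof (intro allI impI)
    fix i assume i: "i \<le> n"
    have "fps_nth (f ^ Suc K) i = (\<Sum>j=0..i. fps_nth f j * fps_nth (f ^ K) (i - j))" by (simp add: fps_mult_nth)
    also have "\<dots> = (\<Sum>j=0..i. fps_nth g j * fps_nth (g ^ K) (i - j))"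
      using assms Suc.IH i by (intro sum.cong) auto
    also have "\<dots> = fps_nth (g ^ Suc K) i" by (simp add: fps_mult_nth)
    finally show "fps_nth (f ^ Suc K) i = fps_nth (g ^ Suc K) i" .
  qed
qed simp

lemma prodX:
  "(\<Prod>m\<in>I. fps_const (c m) * (fps_const (b m) * fps_X ^ m) ^ (k m)) =
     fps_const (\<Prod>m\<in>I. c m * b m ^ k m) * (fps_X :: complex fps) ^ (\<Sum>m\<in>I. m * k m)"
proof (induction I rule: infinite_finite_induct)
  case (insert x F)
  have h1: "fps_const (c x) * (fps_const (b x) * fps_X ^ x) ^ k x =
        fps_const (c x * b x ^ k x) * (fps_X :: complex fps) ^ (x * k x)"
    by (simp add: power_mult_distrib power_mult[symmetric] mult.assoc[symmetric])
  have "(\<Prod>m\<in>insert x F. fps_const (c m) * (fps_const (b m) * fps_X ^ m) ^ (k m)) =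
     (fps_const (c x * b x ^ k x) * (fps_X :: complex fps) ^ (x * k x)) *
     (fps_const (\<Prod>m\<in>F. c m * b m ^ k m) * (fps_X :: complex fps) ^ (\<Sum>m\<in>F. m * k m))"
    by (subst prod.insert[OF insert.hyps]) (simp only: h1 insert.IH)
  also have "\<dots> = (fps_const (c x * b x ^ k x) * fps_const (\<Prod>m\<in>F. c m * b m ^ k m)) *
       ((fps_X :: complex fps) ^ (x * k x) * fps_X ^ (\<Sum>m\<in>F. m * k m))"
    by (simp only: mult_ac)
  also have "\<dots> = fps_const (\<Prod>m\<in>insert x F. c m * b m ^ k m) * (fps_X :: complex fps) ^ (\<Sum>m\<in>insert x F. m * k m)"
    by (simp only: prod.insert[OF insert.hyps] sum.insert[OF insert.hyps] fps_const_mult power_add)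
  finally show ?case .
qed simp_all

lemma Bpow_coeff:
  fixes B :: "complex fps"
  assumes B0: "fps_nth B 0 = 0" and Kp: "K \<le> p"
  shows "fps_nth (B ^ K) p = fact K * (\<Sum>k\<in>{k \<in> PiE {1..p} (\<lambda>_. {0..p}). sum k {1..p} = K}.
           if (\<Sum>m\<in>{1..p}. m * k m) = p then (\<Prod>m\<in>{1..p}. fps_nth B m ^ k m / fact (k m)) else 0)"
proof -
  define Bp where "Bp = (\<Sum>m\<in>{1..p}. fps_const (fps_nth B m) * fps_X ^ m)"
  have "\<forall>i\<le>p. fps_nth B i = fps_nth Bp i"
  proof (intro allI impI)
    fix i assume "i \<le> p"
    have "fps_nth Bp i = (\<Sum>m\<in>{1..p}. if m = i then fps_nth B m else 0)"
      unfolding Bp_def fps_sum_nth by (intro sum.cong) auto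
    also have "\<dots> = fps_nth B i" using \<open>i \<le> p\<close> B0 by (cases "i = 0") (auto simp: sum.delta)
    finally show "fps_nth B i = fps_nth Bp i" ..
  qed
  hence e1: "fps_nth (B ^ K) p = fps_nth (Bp ^ K) p" using power_trunc by blast
  have "fps_const (1 / fact K) * Bp ^ K = (\<Sum>k\<in>{k \<in> PiE {1..p} (\<lambda>_. {0..p}). sum k {1..p} = K}.
        \<Prod>m\<in>{1..p}. fps_const (1 / fact (k m)) * (fps_const (fps_nth B m) * fps_X ^ m) ^ k m)"
    unfolding Bp_def by (rule multinom[OF _ Kp]) simp
  also have "\<dots> = (\<Sum>k\<in>{k \<in> PiE {1..p} (\<lambda>_. {0..p}). sum k {1..p} = K}.
        fps_const (\<Prod>m\<in>{1..p}. 1 / fact (k m) * fps_nth B m ^ k m) * fps_X ^ (\<Sum>m\<in>{1..p}. m * k m))"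
    by (simp only: prodX)
  finally have "fps_nth (fps_const (1 / fact K) * Bp ^ K) p = fps_nth (\<dots>) p" by (rule arg_cong)
  hence H: "(1 / fact K) * fps_nth (Bp ^ K) p = (\<Sum>k\<in>{k \<in> PiE {1..p} (\<lambda>_. {0..p}). sum k {1..p} = K}.
           if (\<Sum>m\<in>{1..p}. m * k m) = p then (\<Prod>m\<in>{1..p}. fps_nth B m ^ k m / fact (k m)) else 0)"
  proof -
    assume E: "fps_nth (fps_const (1 / fact K) * Bp ^ K) p = fps_nth (\<Sum>k\<in>{k \<in> PiE {1..p} (\<lambda>_. {0..p}). sum k {1..p} = K}.
        fps_const (\<Prod>m\<in>{1..p}. 1 / fact (k m) * fps_nth B m ^ k m) * fps_X ^ (\<Sum>m\<in>{1..p}. m * k m)) p"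
    have t: "fps_nth (fps_const c * (fps_X :: complex fps) ^ s) p = (if s = p then c else 0)" for c s
      by (simp add: fps_X_power_mult_right_nth)
    have "(1 / fact K) * fps_nth (Bp ^ K) p = fps_nth (fps_const (1 / fact K) * Bp ^ K) p" by simp
    also have "\<dots> = (\<Sum>k\<in>{k \<in> PiE {1..p} (\<lambda>_. {0..p}). sum k {1..p} = K}.
        fps_nth (fps_const (\<Prod>m\<in>{1..p}. 1 / fact (k m) * fps_nth B m ^ k m) * fps_X ^ (\<Sum>m\<in>{1..p}. m * k m)) p)"
      unfolding E fps_sum_nth ..
    also have "\<dots> = (\<Sum>k\<in>{k \<in> PiE {1..p} (\<lambda>_. {0..p}). sum k {1..p} = K}.
           if (\<Sum>m\<in>{1..p}. m * k m) = p then (\<Prod>m\<in>{1..p}. fps_nth B m ^ k m / fact (k m)) else 0)"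
    proof (rule sum.cong[OF refl])
      fix k
      have "(\<Prod>m\<in>{1..p}. 1 / fact (k m) * fps_nth B m ^ k m) = (\<Prod>m\<in>{1..p}. fps_nth B m ^ k m / fact (k m))"
        by (intro prod.cong) auto
      thus "fps_nth (fps_const (\<Prod>m\<in>{1..p}. 1 / fact (k m) * fps_nth B m ^ k m) * fps_X ^ (\<Sum>m\<in>{1..p}. m * k m)) p =
         (if (\<Sum>m\<in>{1..p}. m * k m) = p then (\<Prod>m\<in>{1..p}. fps_nth B m ^ k m / fact (k m)) else 0)"
        by (simp only: t)
    qed
    finally show ?thesis .
  qed
  have "fps_nth (B ^ K) p = fact K * ((1 / fact K) * fps_nth (Bp ^ K) p)" using e1 by simp
  thus ?thesis unfolding H .
qed

lemma term_eq:
  fixes A :: "complex fps" and a0 lam X :: complex and k :: "nat \<Rightarrow> nat" and p K :: nat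
  assumes a0: "a0 \<noteq> 0" "exp lam = a0" and K: "K = sum k {1..p}"
  shows "cpow lam X * ((X gchoose K) * fact K *
            (if (\<Sum>m\<in>{1..p}. m * k m) = p then (\<Prod>m\<in>{1..p}. (inverse a0 * fps_nth A m) ^ k m / fact (k m)) else 0))
       = (X gchoose K) * (of_nat (fact K) / of_nat (\<Prod>m\<in>{1..p}. fact (k m)))
            * (if p = (\<Sum>m\<in>{1..p}. m * k m) then 1 else 0)
            * cpow lam (X - of_nat K)
            * (\<Prod>m\<in>{1..p}. fps_nth A m ^ k m)"
proof (cases "(\<Sum>m\<in>{1..p}. m * k m) = p")
  case True
  have pf: "(\<Prod>m\<in>{1..p}. fact (k m) :: complex) \<noteq> 0" by simp
  have Hp: "(\<Prod>m\<in>{1..p}. (inverse a0 * fps_nth A m) ^ k m / fact (k m))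
        = (\<Prod>m\<in>{1..p}. fps_nth A m ^ k m) / (a0 ^ K * (\<Prod>m\<in>{1..p}. fact (k m)))"
  proof -
    have "(\<Prod>m\<in>{1..p}. (inverse a0 * fps_nth A m) ^ k m / fact (k m))
        = (\<Prod>m\<in>{1..p}. fps_nth A m ^ k m * (inverse a0) ^ k m / fact (k m))"
      by (intro prod.cong) (auto simp: power_mult_distrib mult.commute)
    also have "\<dots> = (\<Prod>m\<in>{1..p}. fps_nth A m ^ k m) * (\<Prod>m\<in>{1..p}. (inverse a0) ^ k m) / (\<Prod>m\<in>{1..p}. fact (k m))"
      by (simp add: prod.distrib prod_dividef)
    also have "(\<Prod>m\<in>{1..p}. (inverse a0) ^ k m) = inverse a0 ^ K" by (simp add: K power_sum)
    finally show ?thesis using a0 by (simp add: field_simps power_inverse)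
  qed
  have Hc: "cpow lam (X - of_nat K) = cpow lam X / a0 ^ K"
    using a0 by (simp add: cpow_def left_diff_distrib exp_diff exp_of_nat_mult)
  have an: "a0 ^ K \<noteq> 0" using a0 by simp
  show ?thesis unfolding Hp Hc using True an pf by (simp add: of_nat_prod field_simps)
qed auto

lemma partI:
  fixes A :: "complex fps" and a0 lam X :: complex and p :: nat
  assumes A0: "fps_nth A 0 = a0" and a0: "a0 \<noteq> 0" "exp lam = a0"
  shows "fps_nth (fps_const (cpow lam X) * (fps_binomial X oo (fps_const (inverse a0) * A - 1))) p =
       (\<Sum>k\<in>PiE {1..p} (\<lambda>_. {0..p}).
          (let K = (\<Sum>m\<in>{1..p}. k m) in
            (X gchoose K) * (of_nat (fact K) / of_nat (\<Prod>m\<in>{1..p}. fact (k m)))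
            * (if p = (\<Sum>m\<in>{1..p}. m * k m) then 1 else 0)
            * cpow lam (X - of_nat K)
            * (\<Prod>m\<in>{1..p}. fps_nth A m ^ k m)))"
proof -
  define B where "B = fps_const (inverse a0) * A - 1"
  have B0: "fps_nth B 0 = 0" using A0 a0 by (simp add: B_def)
  have Bm: "fps_nth B m = inverse a0 * fps_nth A m" if "m \<in> {1..p}" for m using that by (simp add: B_def)
  define P where "P = PiE {1..p} (\<lambda>_::nat. {0..p::nat})"
  have finP: "finite P" by (simp add: P_def finite_PiE)
  define h where "h = (\<lambda>k::nat\<Rightarrow>nat. if (\<Sum>m\<in>{1..p}. m * k m) = p then (\<Prod>m\<in>{1..p}. fps_nth B m ^ k m / fact (k m)) else 0)"
  define T where "T = (\<lambda>k::nat\<Rightarrow>nat. cpow lam X * ((X gchoose (sum k {1..p})) * fact (sum k {1..p}) * h k))"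
  have "fps_nth (fps_const (cpow lam X) * (fps_binomial X oo B)) p
      = cpow lam X * (\<Sum>K\<in>{0..p}. (X gchoose K) * fps_nth (B ^ K) p)"
    by (simp add: fps_compose_nth)
  also have "\<dots> = cpow lam X * (\<Sum>K\<in>{0..p}. (X gchoose K) * (fact K * (\<Sum>k\<in>{k \<in> P. sum k {1..p} = K}. h k)))"
    using Bpow_coeff[OF B0] by (intro arg_cong[where f = "\<lambda>x. cpow lam X * x"] sum.cong) (auto simp: P_def h_def)
  also have "\<dots> = (\<Sum>K\<in>{0..p}. (\<Sum>k\<in>{k \<in> P. sum k {1..p} = K}. T k))"
    by (simp add: T_def sum_distrib_left mult.assoc)
  also have "\<dots> = (\<Sum>K\<in>{0..p}. (\<Sum>k\<in>{k \<in> {k\<in>P. sum k {1..p} \<le> p}. sum k {1..p} = K}. T k))"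
    by (intro sum.cong refl arg_cong[where f = "sum T"]) auto
  also have "\<dots> = (\<Sum>k\<in>{k\<in>P. sum k {1..p} \<le> p}. T k)"
    by (rule sum.group) (use finP in auto)
  also have "\<dots> = (\<Sum>k\<in>P. T k)"
  proof (rule sum.mono_neutral_left)
    show "\<forall>k\<in>P - {k \<in> P. sum k {1..p} \<le> p}. T k = 0"
    proof
      fix k assume "k \<in> P - {k \<in> P. sum k {1..p} \<le> p}"
      hence gt: "sum k {1..p} > p" by auto
      have "sum k {1..p} \<le> (\<Sum>m\<in>{1..p}. m * k m)" by (intro sum_mono) auto
      hence "(\<Sum>m\<in>{1..p}. m * k m) \<noteq> p" using gt by linarith
      thus "T k = 0" by (simp add: T_def h_def)
    qed
  qed (use finP in auto)
  also have "\<dots> = (\<Sum>k\<in>PiE {1..p} (\<lambda>_. {0..p}).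
          (let K = (\<Sum>m\<in>{1..p}. k m) in
            (X gchoose K) * (of_nat (fact K) / of_nat (\<Prod>m\<in>{1..p}. fact (k m)))
            * (if p = (\<Sum>m\<in>{1..p}. m * k m) then 1 else 0)
            * cpow lam (X - of_nat K)
            * (\<Prod>m\<in>{1..p}. fps_nth A m ^ k m)))"
    unfolding P_def Let_def
  proof (rule sum.cong[OF refl])
    fix k :: "nat \<Rightarrow> nat"
    have "h k = (if (\<Sum>m\<in>{1..p}. m * k m) = p then (\<Prod>m\<in>{1..p}. (inverse a0 * fps_nth A m) ^ k m / fact (k m)) else 0)"
      unfolding h_def using Bm by (auto intro!: prod.cong)
    thus "T k = (X gchoose sum k {1..p}) * (of_nat (fact (sum k {1..p})) / of_nat (\<Prod>m\<in>{1..p}. fact (k m)))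
            * (if p = (\<Sum>m\<in>{1..p}. m * k m) then 1 else 0)
            * cpow lam (X - of_nat (sum k {1..p}))
            * (\<Prod>m\<in>{1..p}. fps_nth A m ^ k m)"
      unfolding T_def using term_eq[where X=X and k=k and A=A and p=p and K="sum k {1..p}", OF a0 refl] by simp
  qed
  finally show ?thesis by (simp add: B_def)
qed

theorem theorem1:
  fixes F L :: "complex \<Rightarrow> complex" and r :: real and X lam :: complex
  assumes "r > 0"
    and "F holomorphic_on ball 0 r"
    and "F 0 \<noteq> 0"
    and "exp lam = F 0"
    and "L holomorphic_on ball 0 r"
    and "\<And>z. z \<in> ball 0 r \<Longrightarrow> exp (L z) = F z"
    and "L 0 = lam"
  shows "\<forall>p::nat.
     taylor_coeff (\<lambda>z. exp (X * L z)) p =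
       (\<Sum>k\<in>PiE {1..p} (\<lambda>_. {0..p}).
          (let K = (\<Sum>m\<in>{1..p}. k m) in
            (X gchoose K) * (of_nat (fact K) / of_nat (\<Prod>m\<in>{1..p}. fact (k m)))
            * (if p = (\<Sum>m\<in>{1..p}. m * k m) then 1 else 0)
            * cpow lam (X - of_nat K)
            * (\<Prod>m\<in>{1..p}. taylor_coeff F m ^ k m)))
     \<and> taylor_coeff (\<lambda>z. exp (X * L z)) p =
       (cpow lam X) ^ (p + 1) *
         det (toeplitz_pow lam (toeplitz_lt (taylor_coeff F) p) (- X) + E_mat lam X p)"
proof -
  define A where "A = fps_expansion F 0"
  define G where "G = (\<lambda>z. exp (X * L z))"
  define B where "B = fps_const (inverse (F 0)) * A - 1"
  define C where "C = fps_const (cpow lam X) * (fps_binomial X oo B)"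
  define Dm where "Dm = fps_const (cpow lam (-X)) * (fps_binomial (-X) oo B)"
  have tcF: "taylor_coeff F = (\<lambda>m. fps_nth A m)"
    by (auto simp: fun_eq_iff taylor_coeff_def A_def fps_expansion_def)
  have GC: "fps_expansion G 0 = C"
    unfolding G_def C_def B_def A_def by (rule analytic_part[OF assms])
  have tcG: "taylor_coeff (\<lambda>z. exp (X * L z)) q = fps_nth C q" for q
    using GC by (auto simp: taylor_coeff_def G_def fps_expansion_def)
  have A0: "fps_nth A 0 = F 0" by (simp add: A_def fps_expansion_def)
  have c1: "cpow lam 1 = F 0" using assms(4) by (simp add: cpow_def)
  have B0: "fps_nth B 0 = 0" using A0 assms(3) by (simp add: B_def)
  have CD: "C * Dm = 1"
  proof -
    have "C * Dm = fps_const (cpow lam X * cpow lam (-X)) * ((fps_binomial X oo B) * (fps_binomial (-X) oo B))"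
      by (simp add: C_def Dm_def mult_ac)
    also have "cpow lam X * cpow lam (-X) = 1" by (simp add: cpow_def exp_minus field_simps)
    also have "(fps_binomial X oo B) * (fps_binomial (-X) oo B) = (fps_binomial X * fps_binomial (-X)) oo B"
      by (rule fps_compose_mult_distrib[OF B0, symmetric])
    also have "fps_binomial X * fps_binomial (-X) = fps_binomial (X + -X)"
      by (rule fps_binomial_add_mult[symmetric])
    finally show ?thesis by simp
  qed
  have C0: "fps_nth C 0 = cpow lam X" by (simp add: C_def)
  show ?thesis
  proof (intro allI conjI)
    fix p :: nat
    show "taylor_coeff (\<lambda>z. exp (X * L z)) p =
       (\<Sum>k\<in>PiE {1..p} (\<lambda>_. {0..p}).
          (let K = (\<Sum>m\<in>{1..p}. k m) in
            (X gchoose K) * (of_nat (fact K) / of_nat (\<Prod>m\<in>{1..p}. fact (k m)))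
            * (if p = (\<Sum>m\<in>{1..p}. m * k m) then 1 else 0)
            * cpow lam (X - of_nat K)
            * (\<Prod>m\<in>{1..p}. taylor_coeff F m ^ k m)))"
      unfolding tcG tcF C_def B_def by (rule partI[OF A0 assms(3,4)])
    have M: "toeplitz_lt (taylor_coeff F) p = Tm (p+1) A"
      unfolding tcF by (rule toeplitz_lt_Tm)
    have P: "toeplitz_pow lam (Tm (p+1) A) (- X) = Tm (p+1) Dm"
      using toeplitz_pow_Tm[of A lam "p+1" "-X"] A0 c1 assms(3) by (simp add: Dm_def B_def)
    show "taylor_coeff (\<lambda>z. exp (X * L z)) p =
       (cpow lam X) ^ (p + 1) *
         det (toeplitz_pow lam (toeplitz_lt (taylor_coeff F) p) (- X) + E_mat lam X p)"
      unfolding M P tcG using det_part[OF CD C0, of p] by simp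
  qed
qed

end
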